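(* Fix a base $\beta\ge2$, let $0<C<1$, and suppose the mantissa length $t$ satisfies $$t\ \ge\ 1+\log_\beta\!\Big[\frac{(1+C)(4+5C)}{C}\sum_{m=1}^{n-1}\sum_{\ell=1}^{n-m}g\big[\mathbf{CP}_\ell(\mathbb{R})\big]\,g\big[\mathbf{CP}_m(\mathbb{R})\big]\Big].$$ Then $G\big[\widehat{\mathbf{CP}}_n(\mathbb{R})\big]\le(1+C)\,g\big[\mathbf{CP}_n(\mathbb{R})\big]$.
   Context: Exact Gaussian elimination without pivoting on $A=(a_{i,j})$: $a^{(1)}_{i,j}=a_{i,j}$, $a^{(k+1)}_{i,j}=a^{(k)}_{i,j}-a^{(k)}_{i,k}a^{(k)}_{k,j}/a^{(k)}_{k,k}$ for $k+1\le i,j\le n$; $g(A)=\max_{i,j,k}|a^{(k)}_{i,j}|/\max_{i,j}|a_{i,j}|$; $\mathbf{CP}_n(\mathbb{R})$ is the set of invertible real $n\times n$ matrices for which this is defined and $|a^{(k)}_{i,j}|\le|a^{(k)}_{k,k}|$ for all $k$, $i,j\ge k$; $g[\mathbf{X}]=\sup_{A\in\mathbf{X}}g(A)$. Floating-point model with base $\beta$, mantissa length $t$, unit roundoff $u=\beta^{1-t}/2$ (overflow/underflow ignored): a floating-point elimination run on a real $n\times n$ matrix $A$ is an array $\hat a^{(k)}_{i,j}$ with $\hat a^{(1)}_{i,j}=a_{i,j}(1+\phi^{(0)}_{i,j})$, $\hat a^{(k+1)}_{i,j}=\big[\hat a^{(k)}_{i,j}-s_{i,k}\hat a^{(k)}_{k,j}(1+\theta^{(k)}_{i,j})\big](1+\phi^{(k)}_{i,j})$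 for $k+1\le i,j\le n$, where $s_{i,k}=\frac{\hat a^{(k)}_{i,k}}{\hat a^{(k)}_{k,k}}(1+\varphi_{i,k})$, for some parameters with $|\theta^{(k)}_{i,j}|,|\phi^{(k)}_{i,j}|,|\varphi_{i,k}|\le u$, and with $|s_{i,k}|\le 1$, $|s_{i,k}(1+\theta^{(k)}_{i,j})|\le1$. $\widehat{\mathbf{CP}}_n(\mathbb{R})$ consists of (invertible real $A$, run) pairs with all $\hat a^{(k)}_{k,k}\ne0$ and $|\hat a^{(k)}_{i,j}|\le|\hat a^{(k)}_{k,k}|$ for all $k$ and $i,j\ge k$. The floating-point growth factor is $G(A)=\max_{i,j,k}|\hat a^{(k)}_{i,j}|/\max_{i,j}|\hat a^{(1)}_{i,j}|$ and $G[\widehat{\mathbf{CP}}_n(\mathbb{R})]$ is its supremum over $\widehat{\mathbf{CP}}_n(\mathbb{R})$. *)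

theory Defs
  imports Complex_Main "HOL-Library.Extended_Real"
begin

text \<open>Real n x n matrices are functions nat => nat => real, entries indexed by 1..n
  (values outside this range are irrelevant).\<close>

definition mat_invertible :: "nat \<Rightarrow> (nat \<Rightarrow> nat \<Rightarrow> real) \<Rightarrow> bool" where
  "mat_invertible n A \<longleftrightarrow> (\<exists>B :: nat \<Rightarrow> nat \<Rightarrow> real.
     (\<forall>i\<in>{1..n}. \<forall>j\<in>{1..n}. (\<Sum>l=1..n. A i l * B l j) = (if i = j then 1 else 0)) \<and>
     (\<forall>i\<in>{1..n}. \<forall>j\<in>{1..n}. (\<Sum>l=1..n. B i l * A l j) = (if i = j then 1 else 0)))"

text \<open>Exact Gaussian elimination: ge A k i j = a^(k)_{i,j} (for k >= 1).\<close>
fun ge :: "(nat \<Rightarrow> nat \<Rightarrow> real) \<Rightarrow> nat \<Rightarrow> nat \<Rightarrow> nat \<Rightarrow> real" where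
  "ge A 0 i j = A i j"
| "ge A (Suc k) i j =
     (if k = 0 then A i j
      else ge A k i j - ge A k i k * ge A k k j / ge A k k k)"

definition max_entry :: "nat \<Rightarrow> (nat \<Rightarrow> nat \<Rightarrow> real) \<Rightarrow> real" where
  "max_entry n A = Max {\<bar>A i j\<bar> | i j. i \<in> {1..n} \<and> j \<in> {1..n}}"

definition max_stage_entry :: "nat \<Rightarrow> (nat \<Rightarrow> nat \<Rightarrow> nat \<Rightarrow> real) \<Rightarrow> real" where
  "max_stage_entry n a = Max {\<bar>a k i j\<bar> | k i j. 1 \<le> k \<and> k \<le> i \<and> k \<le> j \<and> i \<le> n \<and> j \<le> n}"

definition growth :: "nat \<Rightarrow> (nat \<Rightarrow> nat \<Rightarrow> real) \<Rightarrow> real" where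
  "growth n A = max_stage_entry n (ge A) / max_entry n A"

definition CP :: "nat \<Rightarrow> (nat \<Rightarrow> nat \<Rightarrow> real) set" where
  "CP n = {A. mat_invertible n A \<and>
      (\<forall>k\<in>{1..<n}. ge A k k k \<noteq> 0) \<and>
      (\<forall>k\<in>{1..n}. \<forall>i\<in>{k..n}. \<forall>j\<in>{k..n}. \<bar>ge A k i j\<bar> \<le> \<bar>ge A k k k\<bar>)}"

definition gCP :: "nat \<Rightarrow> ereal" where
  "gCP n = (SUP A\<in>CP n. ereal (growth n A))"

definition unit_roundoff :: "nat \<Rightarrow> nat \<Rightarrow> real" where
  "unit_roundoff \<beta> t = real \<beta> powr (1 - real t) / 2"

text \<open>ah is a floating-point elimination run on A (ah k i j = hat a^(k)_{i,j}).\<close>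
definition fp_run :: "nat \<Rightarrow> nat \<Rightarrow> nat \<Rightarrow> (nat \<Rightarrow> nat \<Rightarrow> real)
      \<Rightarrow> (nat \<Rightarrow> nat \<Rightarrow> nat \<Rightarrow> real) \<Rightarrow> bool" where
  "fp_run \<beta> t n A ah \<longleftrightarrow>
    (\<exists>(\<theta>::nat \<Rightarrow> nat \<Rightarrow> nat \<Rightarrow> real) (\<phi>::nat \<Rightarrow> nat \<Rightarrow> nat \<Rightarrow> real) (\<vv>::nat \<Rightarrow> nat \<Rightarrow> real).
      (\<forall>k i j. \<bar>\<theta> k i j\<bar> \<le> unit_roundoff \<beta> t \<and> \<bar>\<phi> k i j\<bar> \<le> unit_roundoff \<beta> t) \<and>
      (\<forall>i k. \<bar>\<vv> i k\<bar> \<le> unit_roundoff \<beta> t) \<and>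
      (\<forall>i\<in>{1..n}. \<forall>j\<in>{1..n}. ah 1 i j = A i j * (1 + \<phi> 0 i j)) \<and>
      (\<forall>k\<ge>1. \<forall>i\<in>{k+1..n}. \<forall>j\<in>{k+1..n}.
         (let s = ah k i k / ah k k k * (1 + \<vv> i k) in
           ah (k+1) i j = (ah k i j - s * ah k k j * (1 + \<theta> k i j)) * (1 + \<phi> k i j) \<and>
           \<bar>s\<bar> \<le> 1 \<and> \<bar>s * (1 + \<theta> k i j)\<bar> \<le> 1)))"

definition hatCP :: "nat \<Rightarrow> nat \<Rightarrow> nat
      \<Rightarrow> ((nat \<Rightarrow> nat \<Rightarrow> real) \<times> (nat \<Rightarrow> nat \<Rightarrow> nat \<Rightarrow> real)) set" where
  "hatCP \<beta> t n = {(A, ah). mat_invertible n A \<and> fp_run \<beta> t n A ah \<and>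
      (\<forall>k\<in>{1..n}. ah k k k \<noteq> 0) \<and>
      (\<forall>k\<in>{1..n}. \<forall>i\<in>{k..n}. \<forall>j\<in>{k..n}. \<bar>ah k i j\<bar> \<le> \<bar>ah k k k\<bar>)}"

definition fp_growth :: "nat \<Rightarrow> (nat \<Rightarrow> nat \<Rightarrow> nat \<Rightarrow> real) \<Rightarrow> real" where
  "fp_growth n ah = max_stage_entry n ah / max_entry n (ah 1)"

definition GhatCP :: "nat \<Rightarrow> nat \<Rightarrow> nat \<Rightarrow> ereal" where
  "GhatCP \<beta> t n = (SUP p\<in>hatCP \<beta> t n. ereal (fp_growth n (snd p)))"

end

theory Submission
  imports Defs "Jordan_Normal_Form.Determinant"
begin


lemma err_arith:
  fixes a b c p s th ph vp u :: real
  assumes p: "p \<noteq> 0" and a: "\<bar>a\<bar> \<le> \<bar>p\<bar>" and b: "\<bar>b\<bar> \<le> \<bar>p\<bar>" and th: "\<bar>th\<bar> \<le> u"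
    and ph: "\<bar>ph\<bar> \<le> u" and vp: "\<bar>vp\<bar> \<le> u" and u8: "u \<le> 1/8"
    and s: "s = c/p*(1+vp)" and w1: "\<bar>s*(1+th)\<bar> \<le> 1"
  shows "\<bar>(a - s*b*(1+th))*(1+ph) - (a - c*b/p)\<bar> \<le> 5*u*\<bar>p\<bar>"
proof -
  define w where "w = s*(1+th)"
  define d where "d = (1+vp)*(1+th)"
  have u0: "0 \<le> u" using th by linarith
  have d1: "7/8 \<le> 1+vp" "7/8 \<le> 1+th" using th vp u8 by (auto simp: abs_le_iff)
  have "(7/8)*(7/8) \<le> (1+vp)*(1+th)" by (rule mult_mono) (use d1 in auto)
  hence dpos: "49/64 \<le> d" unfolding d_def by simp
  have dnz: "d \<noteq> 0" using dpos by auto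
  have "w = c/p * d" unfolding w_def d_def s by (simp add: algebra_simps add_divide_distrib)
  hence cp: "c/p = w/d" using dnz by simp
  have eq: "(a - s*b*(1+th))*(1+ph) - (a - c*b/p) = a*ph - w*b*(ph + (d-1)/d)"
    using cp dnz p unfolding w_def by (simp add: field_simps)
  have "\<bar>vp*th\<bar> \<le> u*u" unfolding abs_mult using mult_mono[OF vp th] u0 by simp
  also have "\<dots> \<le> u/8" using u0 u8 mult_left_mono[OF u8 u0] by simp
  finally have vt: "\<bar>vp*th\<bar> \<le> u/8" .
  have "d - 1 = vp + th + vp*th" unfolding d_def by (simp add: algebra_simps)
  moreover have "\<bar>vp + th + vp*th\<bar> \<le> \<bar>vp\<bar> + \<bar>th\<bar> + \<bar>vp*th\<bar>"
    using abs_triangle_ineq[of "vp+th" "vp*th"] abs_triangle_ineq[of vp th] by linarith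
  ultimately have "\<bar>d - 1\<bar> \<le> 17/8*u" using th vp vt by simp
  hence "\<bar>d-1\<bar>/d \<le> (17/8*u)/(49/64)" using dpos u0
    by (intro frac_le) auto
  hence "\<bar>(d-1)/d\<bar> \<le> (17/8*u)/(49/64)" using dpos by (simp add: abs_divide)
  hence dd: "\<bar>(d-1)/d\<bar> \<le> 136/49*u" by simp
  have "\<bar>a*ph - w*b*(ph + (d-1)/d)\<bar> \<le> \<bar>a\<bar>*\<bar>ph\<bar> + \<bar>w\<bar>*\<bar>b\<bar>*(\<bar>ph\<bar> + \<bar>(d-1)/d\<bar>)"
  proof -
    have t2: "\<bar>ph + (d-1)/d\<bar> \<le> \<bar>ph\<bar> + \<bar>(d-1)/d\<bar>" by (rule abs_triangle_ineq)
    have "\<bar>w*b*(ph + (d-1)/d)\<bar> \<le> \<bar>w\<bar>*\<bar>b\<bar>*(\<bar>ph\<bar> + \<bar>(d-1)/d\<bar>)"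
      unfolding abs_mult by (rule mult_left_mono[OF t2]) simp
    thus ?thesis using abs_triangle_ineq4[of "a*ph" "w*b*(ph + (d-1)/d)"] by (simp add: abs_mult)
  qed
  also have "\<dots> \<le> \<bar>p\<bar>*u + 1*\<bar>p\<bar>*(u + 136/49*u)"
    apply (intro add_mono mult_mono) using a ph b dd w1 u0 unfolding w_def by auto
  also have "\<dots> \<le> 5*u*\<bar>p\<bar>" using u0 by (simp add: algebra_simps)
  finally show ?thesis using eq by simp
qed



lemma ge_LU:
  fixes L U :: "nat \<Rightarrow> nat \<Rightarrow> real"
  assumes L1: "\<And>i. L i i = 1" and L0: "\<And>i q. i < q \<Longrightarrow> L i q = 0"
    and U0: "\<And>q j. j < q \<Longrightarrow> U q j = 0" and Ud: "\<And>k. k\<in>{1..N} \<Longrightarrow> U k k \<noteq> 0"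
  shows "1 \<le> k \<Longrightarrow> k \<le> N \<Longrightarrow> k \<le> i \<Longrightarrow> k \<le> j \<Longrightarrow>
     ge (\<lambda>i j. \<Sum>q=1..N. L i q * U q j) k i j = (\<Sum>q=k..N. L i q * U q j)"
proof (induction k arbitrary: i j)
  case 0 then show ?case by simp
next
  case (Suc k)
  show ?case
  proof (cases "k = 0")
    case True then show ?thesis by simp
  next
    case False
    let ?A = "\<lambda>i j. \<Sum>q=1..N. L i q * U q j"
    have k1: "1 \<le> k" "k \<le> N" using False Suc.prems by auto
    have rest0: "(\<Sum>q=Suc k..N. L i q * U q k) = 0" for i
      by (rule sum.neutral) (auto simp: U0)
    have rest0': "(\<Sum>q=Suc k..N. L k q * U q j) = 0" for j
      by (rule sum.neutral) (auto simp: L0)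
    have split: "(\<Sum>q=k..N. L i q * U q j) = L i k * U k j + (\<Sum>q=Suc k..N. L i q * U q j)" for i j
      using k1 by (simp add: sum.atLeast_Suc_atMost)
    have e1: "ge ?A k i j = L i k * U k j + (\<Sum>q=Suc k..N. L i q * U q j)"
      using Suc.IH[of i j] k1 Suc.prems split by auto
    have e2: "ge ?A k i k = L i k * U k k"
      using Suc.IH[of i k] k1 Suc.prems split[of i k] rest0[of i] by auto
    have e3: "ge ?A k k j = U k j"
      using Suc.IH[of k j] k1 Suc.prems split[of k j] rest0'[of j] L1 by auto
    have e4: "ge ?A k k k = U k k"
      using Suc.IH[of k k] k1 split[of k k] rest0'[of k] L1 by auto
    have ukk: "U k k \<noteq> 0" using Ud k1 by auto
    show ?thesis using False e1 e2 e3 e4 ukk by simp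
  qed
qed



lemma sum_shift1: "(\<Sum>q<N. f (Suc q)) = (\<Sum>q=1..N. (f q :: real))"
  by (induction N) auto

lemma LU_invertible:
  fixes L U :: "nat \<Rightarrow> nat \<Rightarrow> real"
  assumes L1: "\<And>i. L i i = 1" and L0: "\<And>i q. i < q \<Longrightarrow> L i q = 0"
    and U0: "\<And>q j. j < q \<Longrightarrow> U q j = 0" and Ud: "\<And>k. k\<in>{1..N} \<Longrightarrow> U k k \<noteq> 0"
  shows "mat_invertible N (\<lambda>i j. \<Sum>q=1..N. L i q * U q j)"
proof -
  define LJ where "LJ = mat N N (\<lambda>(i,j). L (Suc i) (Suc j))"
  define UJ where "UJ = mat N N (\<lambda>(i,j). U (Suc i) (Suc j))"
  have LC: "LJ \<in> carrier_mat N N" and UC: "UJ \<in> carrier_mat N N" unfolding LJ_def UJ_def by auto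
  have dL: "det LJ = 1"
  proof -
    have "det LJ = prod_list (diag_mat LJ)"
      by (rule det_lower_triangular[OF _ LC]) (auto simp: LJ_def L0)
    moreover have "diag_mat LJ = map (\<lambda>i. 1) [0..<N]" unfolding diag_mat_def LJ_def
      using LC by (auto simp: L1 LJ_def)
    finally show ?thesis by (simp add: map_replicate_const)
  qed
  have dU: "det UJ \<noteq> 0"
  proof -
    have "det UJ = prod_list (diag_mat UJ)"
      by (rule det_upper_triangular[OF _ UC]) (auto simp: UJ_def U0 upper_triangular_def)
    also have "\<dots> \<noteq> 0" unfolding diag_mat_def UJ_def
      using Ud by (auto simp: prod_list_zero_iff)
    finally show ?thesis .
  qed
  define XJ where "XJ = LJ * UJ"
  have XC: "XJ \<in> carrier_mat N N" unfolding XJ_def using LC UC by auto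
  have dX: "det XJ \<noteq> 0" unfolding XJ_def det_mult[OF LC UC] using dL dU by simp
  let ?R = "ring_mat TYPE(real) N undefined"
  from det_non_zero_imp_unit[OF XC dX] have "XJ \<in> Units ?R" .
  then obtain BJ where BJ: "BJ \<in> carrier_mat N N" "BJ * XJ = 1\<^sub>m N" "XJ * BJ = 1\<^sub>m N"
    unfolding Units_def ring_mat_simps by auto
  have XJe: "XJ $$ (i,j) = (\<Sum>q=1..N. L (Suc i) q * U q (Suc j))" if "i < N" "j < N" for i j
  proof -
    have "XJ $$ (i,j) = (\<Sum>q<N. L (Suc i) (Suc q) * U (Suc q) (Suc j))"
      using that LC UC unfolding XJ_def
      by (simp add: index_mult_mat scalar_prod_def LJ_def UJ_def atLeast0LessThan)
    also have "\<dots> = (\<Sum>q=1..N. L (Suc i) q * U q (Suc j))" by (rule sum_shift1)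
    finally show ?thesis .
  qed
  define B where "B = (\<lambda>i j. BJ $$ (i - 1, j - 1))"
  show ?thesis unfolding mat_invertible_def
  proof (intro exI[of _ B] conjI ballI)
    fix i j assume ij: "i \<in> {1..N}" "j \<in> {1..N}"
    define i' where "i' = i - 1"
    define j' where "j' = j - 1"
    have i': "i = Suc i'" "i' < N" and j': "j = Suc j'" "j' < N" using ij by (auto simp: i'_def j'_def)
    have "(XJ * BJ) $$ (i', j') = (\<Sum>l<N. XJ $$ (i', l) * BJ $$ (l, j'))"
      using XC BJ(1) i' j' by (simp add: index_mult_mat scalar_prod_def atLeast0LessThan)
    also have "\<dots> = (\<Sum>l<N. (\<Sum>q=1..N. L i q * U q (Suc l)) * B (Suc l) j)"
      by (rule sum.cong) (simp_all add: XJe i' j' B_def)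
    also have "\<dots> = (\<Sum>l=1..N. (\<Sum>q=1..N. L i q * U q l) * B l j)"
      by (rule sum_shift1)
    finally show "(\<Sum>l=1..N. (\<Sum>q=1..N. L i q * U q l) * B l j) = (if i = j then 1 else 0)"
      using BJ(3) i' j' by simp
    have "(BJ * XJ) $$ (i', j') = (\<Sum>l<N. BJ $$ (i', l) * XJ $$ (l, j'))"
      using XC BJ(1) i' j' by (simp add: index_mult_mat scalar_prod_def atLeast0LessThan)
    also have "\<dots> = (\<Sum>l<N. B i (Suc l) * (\<Sum>q=1..N. L (Suc l) q * U q j))"
      by (rule sum.cong) (simp_all add: XJe i' j' B_def)
    also have "\<dots> = (\<Sum>l=1..N. B i l * (\<Sum>q=1..N. L l q * U q j))"
      by (rule sum_shift1)
    finally show "(\<Sum>l=1..N. B i l * (\<Sum>q=1..N. L l q * U q j)) = (if i = j then 1 else 0)"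
      using BJ(2) i' j' by simp
  qed
qed



lemma hat_piv: "(A,ah)\<in>hatCP \<beta> t n \<Longrightarrow> 1 \<le> k \<Longrightarrow> k \<le> n \<Longrightarrow> ah k k k \<noteq> 0"
  unfolding hatCP_def by auto

lemma hat_dom: "(A,ah)\<in>hatCP \<beta> t n \<Longrightarrow> 1 \<le> k \<Longrightarrow> k \<le> i \<Longrightarrow> k \<le> j \<Longrightarrow> i \<le> n \<Longrightarrow> j \<le> n
   \<Longrightarrow> \<bar>ah k i j\<bar> \<le> \<bar>ah k k k\<bar>"
  unfolding hatCP_def by auto

lemma u_nonneg: "0 \<le> unit_roundoff \<beta> t"
  unfolding unit_roundoff_def by simp

lemma hat_err:
  assumes hat: "(A,ah)\<in>hatCP \<beta> t n" and u8: "unit_roundoff \<beta> t \<le> 1/8"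
    and k: "1 \<le> k" "k < i" "k < j" "i \<le> n" "j \<le> n"
  shows "\<bar>ah (Suc k) i j - (ah k i j - ah k i k * ah k k j / ah k k k)\<bar> \<le> 5 * unit_roundoff \<beta> t * \<bar>ah k k k\<bar>"
proof -
  let ?u = "unit_roundoff \<beta> t"
  from hat have "fp_run \<beta> t n A ah" unfolding hatCP_def by auto
  then obtain th ph vp where b1: "\<And>k i j. \<bar>th k i j\<bar> \<le> ?u \<and> \<bar>ph k i j\<bar> \<le> ?u"
    and b2: "\<And>i k. \<bar>vp i k\<bar> \<le> ?u"
    and rec: "\<forall>k\<ge>1. \<forall>i\<in>{k+1..n}. \<forall>j\<in>{k+1..n}.
         (let s = ah k i k / ah k k k * (1 + vp i k) in
           ah (k+1) i j = (ah k i j - s * ah k k j * (1 + th k i j)) * (1 + ph k i j) \<and>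
           \<bar>s\<bar> \<le> 1 \<and> \<bar>s * (1 + th k i j)\<bar> \<le> 1)"
    unfolding fp_run_def by blast
  define s where "s = ah k i k / ah k k k * (1 + vp i k)"
  from rec k have r: "ah (k+1) i j = (ah k i j - s * ah k k j * (1 + th k i j)) * (1 + ph k i j)"
     "\<bar>s * (1 + th k i j)\<bar> \<le> 1"
    unfolding s_def Let_def by auto
  have "\<bar>(ah k i j - s * ah k k j * (1 + th k i j)) * (1 + ph k i j) - (ah k i j - ah k i k * ah k k j / ah k k k)\<bar>
     \<le> 5 * ?u * \<bar>ah k k k\<bar>"
    apply (rule err_arith[OF _ _ _ _ _ _ u8 s_def r(2)])
    using hat_piv[OF hat, of k] hat_dom[OF hat, of k i j] hat_dom[OF hat, of k k j] k b1 b2 by auto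
  then show ?thesis using r(1) by simp
qed

definition Dd :: "real \<Rightarrow> (nat\<Rightarrow>nat\<Rightarrow>nat\<Rightarrow>real) \<Rightarrow> nat \<Rightarrow> nat \<Rightarrow> real" where
  "Dd u ah N q = 5*u*(\<Sum>s\<in>{q..<N}. \<bar>ah s s s\<bar>)"
definition ff :: "real \<Rightarrow> (nat\<Rightarrow>nat\<Rightarrow>nat\<Rightarrow>real) \<Rightarrow> nat \<Rightarrow> nat \<Rightarrow> real" where
  "ff u ah N q = 1 + Dd u ah N q / \<bar>ah q q q\<bar>"
definition Lm :: "real \<Rightarrow> (nat\<Rightarrow>nat\<Rightarrow>nat\<Rightarrow>real) \<Rightarrow> nat \<Rightarrow> nat \<Rightarrow> nat \<Rightarrow> real" where
  "Lm u ah N i q = (if q < i then ah q i q / (ah q q q * ff u ah N q) else if q = i then 1 else 0)"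
definition Um :: "real \<Rightarrow> (nat\<Rightarrow>nat\<Rightarrow>nat\<Rightarrow>real) \<Rightarrow> nat \<Rightarrow> nat \<Rightarrow> nat \<Rightarrow> real" where
  "Um u ah N q j = (if q \<le> j then ah q q j * ff u ah N q else 0)"
definition Xm :: "real \<Rightarrow> (nat\<Rightarrow>nat\<Rightarrow>nat\<Rightarrow>real) \<Rightarrow> nat \<Rightarrow> nat \<Rightarrow> nat \<Rightarrow> real" where
  "Xm u ah N = (\<lambda>i j. \<Sum>q=1..N. Lm u ah N i q * Um u ah N q j)"

lemma Dd_nonneg: "0 \<le> u \<Longrightarrow> 0 \<le> Dd u ah N q"
  unfolding Dd_def by (simp add: sum_nonneg)

lemma ff_pos: "0 \<le> u \<Longrightarrow> 1 \<le> ff u ah N q"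
  unfolding ff_def using Dd_nonneg[of u ah N q] by simp

lemma piv_ff: "ah q q q \<noteq> 0 \<Longrightarrow> \<bar>ah q q q\<bar> * ff u ah N q = \<bar>ah q q q\<bar> + Dd u ah N q"
  unfolding ff_def by (simp add: field_simps)




lemma fin_stage: fixes N :: nat shows "finite {\<bar>a k i j\<bar> | k i j. 1 \<le> k \<and> k \<le> i \<and> k \<le> j \<and> i \<le> N \<and> j \<le> N}"
proof (rule finite_subset[of _ "(\<lambda>(k,i,j). \<bar>a k i j\<bar>) ` ({0..N}\<times>{0..N}\<times>{0..N})"])
  show "{\<bar>a k i j\<bar> | k i j. 1 \<le> k \<and> k \<le> i \<and> k \<le> j \<and> i \<le> N \<and> j \<le> N}
     \<subseteq> (\<lambda>(k,i,j). \<bar>a k i j\<bar>) ` ({0..N}\<times>{0..N}\<times>{0..N})"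
  proof
    fix x assume "x \<in> {\<bar>a k i j\<bar> | k i j. 1 \<le> k \<and> k \<le> i \<and> k \<le> j \<and> i \<le> N \<and> j \<le> N}"
    then obtain k i j where "x = \<bar>a k i j\<bar>" "1 \<le> k" "k \<le> i" "k \<le> j" "i \<le> N" "j \<le> N" by blast
    then show "x \<in> (\<lambda>(k,i,j). \<bar>a k i j\<bar>) ` ({0..N}\<times>{0..N}\<times>{0..N})"
      by (intro image_eqI[where x="(k,i,j)"]) auto
  qed
qed auto

lemma fin_entry: fixes N :: nat shows "finite {\<bar>A i j\<bar> | i j. i \<in> {1..N} \<and> j \<in> {1..N}}"
proof (rule finite_subset[of _ "(\<lambda>(i,j). \<bar>A i j\<bar>) ` ({1..N}\<times>{1..N})"])
  show "{\<bar>A i j\<bar> | i j. i \<in> {1..N} \<and> j \<in> {1..N}} \<subseteq> (\<lambda>(i,j). \<bar>A i j\<bar>) ` ({1..N}\<times>{1..N})"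
    by auto
qed auto

locale cst =
  fixes u :: real and ah :: "nat \<Rightarrow> nat \<Rightarrow> nat \<Rightarrow> real" and N :: nat
  assumes u0: "0 \<le> u" and N1: "1 \<le> N"
    and piv: "\<And>k. 1 \<le> k \<Longrightarrow> k \<le> N \<Longrightarrow> ah k k k \<noteq> 0"
    and dom: "\<And>k i j. 1 \<le> k \<Longrightarrow> k \<le> i \<Longrightarrow> k \<le> j \<Longrightarrow> i \<le> N \<Longrightarrow> j \<le> N \<Longrightarrow> \<bar>ah k i j\<bar> \<le> \<bar>ah k k k\<bar>"
    and err: "\<And>k i j. 1 \<le> k \<Longrightarrow> k < i \<Longrightarrow> k < j \<Longrightarrow> i \<le> N \<Longrightarrow> j \<le> N \<Longrightarrow>
        \<bar>ah (Suc k) i j - (ah k i j - ah k i k * ah k k j / ah k k k)\<bar> \<le> 5 * u * \<bar>ah k k k\<bar>"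
begin

abbreviation "L \<equiv> Lm u ah N"
abbreviation "U \<equiv> Um u ah N"
abbreviation "F \<equiv> ff u ah N"
abbreviation "D \<equiv> Dd u ah N"
abbreviation "Y k i j \<equiv> (\<Sum>q=k..N. L i q * U q j)"

lemma F1: "1 \<le> F q" using ff_pos[OF u0] .
lemma Fnz: "F q \<noteq> 0" using F1[of q] by auto

lemma Ytop:
  assumes k: "1 \<le> k" "k \<le> min i j" "i \<le> N" "j \<le> N"
  shows "Y k i j = L i (min i j) * U (min i j) j + (\<Sum>q=k..<min i j. L i q * U q j)"
proof -
  let ?m = "min i j"
  let ?g = "\<lambda>q. L i q * U q j"
  have "Y k i j = sum ?g {k..<Suc N}" by (simp add: atLeastLessThanSuc_atLeastAtMost)
  also have "\<dots> = sum ?g {k..<?m} + sum ?g {?m..<Suc N}"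
    using k by (intro sum.atLeastLessThan_concat[symmetric]) auto
  also have "sum ?g {?m..<Suc N} = ?g ?m + sum ?g {Suc ?m..<Suc N}"
    using k by (intro sum.atLeast_Suc_lessThan) auto
  moreover have "sum ?g {Suc ?m..<Suc N} = 0"
    by (rule sum.neutral) (auto simp: Lm_def Um_def)
  ultimately show ?thesis by simp
qed

lemma Ybase:
  assumes k: "1 \<le> min i j" "i \<le> N" "j \<le> N"
  shows "\<bar>Y (min i j) i j - ah (min i j) i j\<bar> \<le> D (min i j)"
proof (cases "i \<le> j")
  case True
  hence m: "min i j = i" by simp
  have Y: "Y i i j = ah i i j * F i" using Ytop[of i i j] k True by (simp add: m Lm_def Um_def)
  have p: "ah i i i \<noteq> 0" using piv k m by auto
  have d: "\<bar>ah i i j\<bar> \<le> \<bar>ah i i i\<bar>" using dom[of i i j] k m True by auto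
  have "\<bar>ah i i j * F i - ah i i j\<bar> = \<bar>ah i i j\<bar> * (D i / \<bar>ah i i i\<bar>)"
    using Dd_nonneg[OF u0] by (simp add: ff_def algebra_simps abs_mult)
  also have "\<dots> \<le> \<bar>ah i i i\<bar> * (D i / \<bar>ah i i i\<bar>)"
    by (rule mult_right_mono[OF d]) (simp add: Dd_nonneg[OF u0])
  also have "\<dots> = D i" using p by simp
  finally show ?thesis using Y m by simp
next
  case False
  hence m: "min i j = j" by simp
  have p: "ah j j j \<noteq> 0" using piv k m by auto
  have Y: "Y j i j = ah j i j" using Ytop[of j i j] k False p Fnz[of j] by (simp add: m Lm_def Um_def)
  show ?thesis using Y m Dd_nonneg[OF u0] by simp
qed

lemma Ybound:
  assumes "1 \<le> k" "k \<le> min i j" "i \<le> N" "j \<le> N"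
  shows "\<bar>Y k i j - ah k i j\<bar> \<le> 5*u*(\<Sum>s=k..<min i j. \<bar>ah s s s\<bar>) + D (min i j)"
  using assms
proof (induction "min i j - k" arbitrary: k)
  case 0
  hence "k = min i j" by simp
  then show ?case using Ybase[of i j] 0 by simp
next
  case (Suc d)
  let ?m = "min i j"
  have km: "k < ?m" "k \<le> N" using Suc by auto
  have IH: "\<bar>Y (Suc k) i j - ah (Suc k) i j\<bar> \<le> 5*u*(\<Sum>s=Suc k..<?m. \<bar>ah s s s\<bar>) + D ?m"
    using Suc.hyps(1)[of "Suc k"] Suc.hyps(2) Suc.prems km by auto
  have p: "ah k k k \<noteq> 0" using piv Suc.prems km by auto
  have sp: "Y k i j = L i k * U k j + Y (Suc k) i j"
    using km by (simp add: sum.atLeast_Suc_atMost)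
  have LU: "L i k * U k j = ah k i k * ah k k j / ah k k k"
    using km p Fnz[of k] by (simp add: Lm_def Um_def)
  have e: "\<bar>ah (Suc k) i j - (ah k i j - ah k i k * ah k k j / ah k k k)\<bar> \<le> 5 * u * \<bar>ah k k k\<bar>"
    using err[of k i j] Suc.prems km by auto
  have ss: "(\<Sum>s=k..<?m. \<bar>ah s s s\<bar>) = \<bar>ah k k k\<bar> + (\<Sum>s=Suc k..<?m. \<bar>ah s s s\<bar>)"
    using km by (simp add: sum.atLeast_Suc_lessThan)
  define X1 where "X1 = Y (Suc k) i j - ah (Suc k) i j"
  define X2 where "X2 = ah (Suc k) i j - (ah k i j - ah k i k * ah k k j / ah k k k)"
  have "Y k i j - ah k i j = X1 + X2"
    unfolding X1_def X2_def using sp LU by simp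
  hence "\<bar>Y k i j - ah k i j\<bar> \<le> \<bar>X1\<bar> + \<bar>X2\<bar>"
    using abs_triangle_ineq[of X1 X2] by simp
  also have "\<dots> \<le> 5*u*(\<Sum>s=k..<?m. \<bar>ah s s s\<bar>) + D ?m"
    using IH e ss unfolding X1_def X2_def by (simp add: algebra_simps)
  finally show ?case .
qed

lemma Yabs:
  assumes "1 \<le> k" "k \<le> i" "k \<le> j" "i \<le> N" "j \<le> N"
  shows "\<bar>Y k i j\<bar> \<le> \<bar>ah k k k\<bar> + D k"
proof -
  let ?m = "min i j"
  have "D k = 5*u*(\<Sum>s=k..<?m. \<bar>ah s s s\<bar>) + D ?m"
    unfolding Dd_def using assms
    by (simp add: sum.atLeastLessThan_concat[symmetric, of k ?m N] algebra_simps)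
  moreover have "\<bar>ah k i j\<bar> \<le> \<bar>ah k k k\<bar>" using dom assms by auto
  moreover have "\<bar>Y k i j - ah k i j\<bar> \<le> 5*u*(\<Sum>s=k..<?m. \<bar>ah s s s\<bar>) + D ?m"
    using Ybound[of k i j] assms by auto
  ultimately show ?thesis by linarith
qed

lemma Ykkk: "1 \<le> k \<Longrightarrow> k \<le> N \<Longrightarrow> Y k k k = ah k k k * F k"
  using Ytop[of k k k] by (simp add: Lm_def Um_def)

lemma Ukk: "1 \<le> k \<Longrightarrow> k \<le> N \<Longrightarrow> U k k \<noteq> 0"
  using piv Fnz by (simp add: Um_def)

lemma geX: "1 \<le> k \<Longrightarrow> k \<le> N \<Longrightarrow> k \<le> i \<Longrightarrow> k \<le> j \<Longrightarrow> ge (Xm u ah N) k i j = Y k i j"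
  unfolding Xm_def
proof (rule ge_LU)
  show "\<And>k. k \<in> {1..N} \<Longrightarrow> U k k \<noteq> 0" using Ukk by auto
qed (auto simp: Lm_def Um_def)

lemma pF: "1 \<le> k \<Longrightarrow> k \<le> N \<Longrightarrow> \<bar>Y k k k\<bar> = \<bar>ah k k k\<bar> + D k"
  using Ykkk piv_ff[of ah k u N] piv F1[of k] by (simp add: abs_mult)

lemma X_CP: "Xm u ah N \<in> CP N"
  unfolding CP_def
proof (intro CollectI conjI ballI)
  show "mat_invertible N (Xm u ah N)" unfolding Xm_def
  proof (rule LU_invertible)
    show "\<And>k. k \<in> {1..N} \<Longrightarrow> U k k \<noteq> 0" using Ukk by auto
  qed (auto simp: Lm_def Um_def)
next
  fix k assume "k \<in> {1..<N}"
  then show "ge (Xm u ah N) k k k \<noteq> 0" using geX[of k k k] Ykkk[of k] piv[of k] Fnz[of k] by auto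
next
  fix k i j assume "k \<in> {1..N}" "i \<in> {k..N}" "j \<in> {k..N}"
  then show "\<bar>ge (Xm u ah N) k i j\<bar> \<le> \<bar>ge (Xm u ah N) k k k\<bar>"
    using geX[of k i j] geX[of k k k] Yabs[of k i j] pF[of k] by auto
qed

lemma X_me: "max_entry N (Xm u ah N) = \<bar>ah 1 1 1\<bar> + D 1"
  unfolding max_entry_def
proof (rule Max_eqI[OF fin_entry])
  fix y assume "y \<in> {\<bar>Xm u ah N i j\<bar> |i j. i \<in> {1..N} \<and> j \<in> {1..N}}"
  then obtain i j where "y = \<bar>Xm u ah N i j\<bar>" "i \<in> {1..N}" "j \<in> {1..N}" by blast
  then show "y \<le> \<bar>ah 1 1 1\<bar> + D 1" using Yabs[of 1 i j] by (simp add: Xm_def)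
next
  have "\<bar>Xm u ah N 1 1\<bar> = \<bar>ah 1 1 1\<bar> + D 1" using pF[of 1] N1 by (simp add: Xm_def)
  then show "\<bar>ah 1 1 1\<bar> + D 1 \<in> {\<bar>Xm u ah N i j\<bar> |i j. i \<in> {1..N} \<and> j \<in> {1..N}}"
    using N1 by force
qed

lemma X_growth:
  assumes "1 \<le> k" "k \<le> N"
  shows "\<bar>ah k k k\<bar> \<le> growth N (Xm u ah N) * (\<bar>ah 1 1 1\<bar> + D 1)"
proof -
  let ?S = "{\<bar>ge (Xm u ah N) k i j\<bar> | k i j. 1 \<le> k \<and> k \<le> i \<and> k \<le> j \<and> i \<le> N \<and> j \<le> N}"
  have "\<bar>ge (Xm u ah N) k k k\<bar> \<in> ?S" using assms by blast
  hence "\<bar>ge (Xm u ah N) k k k\<bar> \<le> max_stage_entry N (ge (Xm u ah N))"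
    unfolding max_stage_entry_def by (rule Max_ge[OF fin_stage])
  moreover have "\<bar>ge (Xm u ah N) k k k\<bar> = \<bar>ah k k k\<bar> + D k" using geX[of k k k] pF[of k] assms by simp
  moreover have mp: "0 < \<bar>ah 1 1 1\<bar> + D 1" using piv[of 1] N1 Dd_nonneg[OF u0, of ah N 1] by auto
  moreover have "0 \<le> D k" using Dd_nonneg[OF u0] .
  moreover have "growth N (Xm u ah N) * (\<bar>ah 1 1 1\<bar> + D 1) = max_stage_entry N (ge (Xm u ah N))"
    unfolding growth_def X_me using mp by simp
  ultimately show ?thesis by linarith
qed

end



lemma ereal_le_sum:
  fixes f :: "nat \<Rightarrow> ereal"
  assumes "finite A" "i \<in> A" "\<And>x. x \<in> A \<Longrightarrow> 0 \<le> f x"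
  shows "f i \<le> sum f A"
proof -
  have "sum f A = f i + sum f (A - {i})" using assms by (simp add: sum.remove)
  moreover have "0 \<le> sum f (A - {i})" using assms by (intro sum_nonneg) auto
  ultimately show ?thesis by (simp add: add_increasing2)
qed

definition idah :: "nat \<Rightarrow> nat \<Rightarrow> nat \<Rightarrow> real" where
  "idah k i j = (if i = j then 1 else 0)"

lemma gCP_ge1: assumes "1 \<le> l" shows "1 \<le> gCP l"
proof -
  interpret cst 0 idah l
    using assms by unfold_locales (auto simp: idah_def assms)
  have "\<bar>idah 1 1 1\<bar> \<le> growth l (Xm 0 idah l) * (\<bar>idah 1 1 1\<bar> + Dd 0 idah l 1)"
    using X_growth[of 1] assms by simp
  hence "1 \<le> growth l (Xm 0 idah l)" by (simp add: idah_def Dd_def)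
  hence "ereal 1 \<le> ereal (growth l (Xm 0 idah l))" by simp
  also have "\<dots> \<le> gCP l" unfolding gCP_def using X_CP by (rule SUP_upper)
  finally show ?thesis by (simp add: one_ereal_def)
qed

lemma num1:
  fixes C Sr Sg u :: real
  assumes "0 < C" "C < 1" "1 \<le> Sr" "0 \<le> Sg" "Sg \<le> Sr" "0 \<le> u"
    and "u \<le> 1/(2*((1+C)*(4+5*C)/C*Sr))"
  shows "5*u*(1+C)*Sg \<le> C" "u \<le> 1/8"
proof -
  define K where "K = 2*((1+C)*(4+5*C)/C*Sr)"
  have K: "0 < K" using assms unfolding K_def by auto
  have "u * K \<le> 1" using pos_le_divide_eq[of K u 1] K assms(7) unfolding K_def[symmetric] by blast
  moreover have "u * K = (u*Sr*(1+C) * (2*(4+5*C))) / C" unfolding K_def by simp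
  ultimately have "(u*Sr*(1+C) * (2*(4+5*C))) / C \<le> 1" by simp
  hence Q: "u*Sr*(1+C) * (2*(4+5*C)) \<le> C" using assms(1) by (simp add: pos_divide_le_eq)
  have "5*u*(1+C)*Sg \<le> 5*(u*Sr*(1+C))" using assms
    by (simp add: mult_left_mono mult_right_mono)
  also have "u*Sr*(1+C) \<le> C / (2*(4+5*C))" using Q assms(1) by (simp add: field_simps)
  hence "5*(u*Sr*(1+C)) \<le> 5*(C / (2*(4+5*C)))" by simp
  also have "5*(C / (2*(4+5*C))) \<le> C" using assms(1) by (simp add: field_simps)
  finally show "5*u*(1+C)*Sg \<le> C" .
  have "u*Sr*(1+C) \<le> u*Sr*(1+C) * (2*(4+5*C)) / 8" using assms by (simp add: field_simps)
  also have "\<dots> \<le> C/8" using Q by simp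
  finally have "u*Sr*(1+C) \<le> C/8" .
  moreover have "u \<le> u*Sr*(1+C)"
  proof -
    have "1*1 \<le> Sr*(1+C)" by (rule mult_mono) (use assms in auto)
    hence "u*1 \<le> u*(Sr*(1+C))" by (intro mult_left_mono) (use assms in auto)
    thus ?thesis by (simp add: mult.assoc)
  qed
  ultimately show "u \<le> 1/8" using assms by simp
qed

lemma hat_cst:
  assumes hat: "(A,ah) \<in> hatCP \<beta> t n" and N: "1 \<le> N" "N \<le> n"
    and u8: "2 \<le> N \<Longrightarrow> unit_roundoff \<beta> t \<le> 1/8"
  shows "cst (unit_roundoff \<beta> t) ah N"
proof
  show "0 \<le> unit_roundoff \<beta> t" by (rule u_nonneg)
  show "1 \<le> N" by fact
  show "\<And>k. 1 \<le> k \<Longrightarrow> k \<le> N \<Longrightarrow> ah k k k \<noteq> 0" using hat_piv[OF hat] N by auto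
  show "\<And>k i j. 1 \<le> k \<Longrightarrow> k \<le> i \<Longrightarrow> k \<le> j \<Longrightarrow> i \<le> N \<Longrightarrow> j \<le> N \<Longrightarrow> \<bar>ah k i j\<bar> \<le> \<bar>ah k k k\<bar>"
    using hat_dom[OF hat] N by auto
  show "\<And>k i j. 1 \<le> k \<Longrightarrow> k < i \<Longrightarrow> k < j \<Longrightarrow> i \<le> N \<Longrightarrow> j \<le> N \<Longrightarrow>
        \<bar>ah (Suc k) i j - (ah k i j - ah k i k * ah k k j / ah k k k)\<bar> \<le> 5 * unit_roundoff \<beta> t * \<bar>ah k k k\<bar>"
    using hat_err[OF hat] N u8 by auto
qed




theorem mainTheorem9:
  fixes \<beta> t n :: nat and C :: real
  assumes "\<beta> \<ge> 2" and "n \<ge> 1" and "0 < C" and "C < 1"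
    and "(\<Sum>m=1..n-1. \<Sum>l=1..n-m. gCP l * gCP m) < \<infinity>"
    and "real t \<ge> 1 + log (real \<beta>)
           ((1 + C) * (4 + 5 * C) / C *
             real_of_ereal (\<Sum>m=1..n-1. \<Sum>l=1..n-m. gCP l * gCP m))"
  shows "GhatCP \<beta> t n \<le> ereal (1 + C) * gCP n"
proof -
  let ?u = "unit_roundoff \<beta> t"
  define S where "S = (\<Sum>m=1..n-1. \<Sum>l=1..n-m. gCP l * gCP m)"
  have g1: "\<And>l. 1 \<le> l \<Longrightarrow> 1 \<le> gCP l" by (rule gCP_ge1)
  have g0: "0 \<le> gCP l" if "1 \<le> l" for l by (rule order_trans[OF _ g1[OF that]]) simp
  have nn: "\<And>l m. 1 \<le> l \<Longrightarrow> 1 \<le> m \<Longrightarrow> 0 \<le> gCP l * gCP m"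
    using g0 by (simp add: ereal_zero_le_0_iff)
  have sumg_le: "(\<Sum>m=1..n-1. gCP m) \<le> S"
    unfolding S_def
  proof (rule sum_mono)
    fix m assume m: "m \<in> {1..n-1}"
    have "gCP m = 1 * gCP m" by simp
    also have "\<dots> \<le> gCP 1 * gCP m" using ereal_mult_right_mono[OF g1[of 1] g0[of m]] m by simp
    also have "\<dots> \<le> (\<Sum>l=1..n-m. gCP l * gCP m)"
      by (rule ereal_le_sum[where f="\<lambda>l. gCP l * gCP m"]) (use m nn in auto)
    finally show "gCP m \<le> (\<Sum>l=1..n-m. gCP l * gCP m)" .
  qed
  have Sfin: "S < \<infinity>" using assms(5) unfolding S_def .
  have "0 \<le> (\<Sum>m=1..n-1. gCP m)" by (rule sum_nonneg) (use g0 in auto)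
  hence S0: "0 \<le> S" using sumg_le by (rule order_trans)
  have ivl: "{1..<n} = {1..n-1}" using assms(2) by auto
  have fin: "gCP s < \<infinity>" if "s \<in> {1..<n}" for s
  proof -
    have "gCP s \<le> (\<Sum>m=1..n-1. gCP m)" by (rule ereal_le_sum) (use that ivl g0 in auto)
    thus ?thesis using sumg_le Sfin by (meson order.trans le_less_trans)
  qed
  define GG where "GG s = real_of_ereal (gCP s)" for s
  have GGe: "gCP s = ereal (GG s)" if "s \<in> {1..<n}" for s
    using fin[OF that] g0[of s] that unfolding GG_def by (cases "gCP s") auto
  have GG0: "0 \<le> GG s" if "1 \<le> s" for s
    unfolding GG_def using g0[OF that] by (simp add: real_of_ereal_pos)
  define Sr where "Sr = real_of_ereal S"
  have SSr: "S = ereal Sr" unfolding Sr_def using Sfin S0 by (cases S) auto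
  have sumGG: "(\<Sum>s\<in>{1..<n}. GG s) \<le> Sr"
  proof -
    have "ereal (\<Sum>s\<in>{1..<n}. GG s) = (\<Sum>s\<in>{1..<n}. gCP s)"
      by (simp add: GGe)
    also have "\<dots> \<le> S" using sumg_le ivl by simp
    finally show ?thesis using SSr by simp
  qed
  have key: "5*?u*(1+C)*(\<Sum>s\<in>{1..<n}. GG s) \<le> C \<and> (2 \<le> n \<longrightarrow> ?u \<le> 1/8)"
  proof (cases "n = 1")
    case True then show ?thesis using assms(3) by simp
  next
    case False
    hence n2: "2 \<le> n" using assms(2) by auto
    have "gCP 1 \<le> (\<Sum>m=1..n-1. gCP m)" by (rule ereal_le_sum) (use n2 g0 in auto)
    hence "1 \<le> S" using g1[of 1] sumg_le by (meson order.trans le_refl)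
    hence Sr1: "1 \<le> Sr" using SSr by (simp add: one_ereal_def)
    define K where "K = (1 + C) * (4 + 5 * C) / C"
    have KS: "0 < K * Sr" unfolding K_def using assms(3) Sr1 by simp
    have b: "1 < real \<beta>" using assms(1) by simp
    have "real t - 1 \<ge> log (real \<beta>) (K * Sr)" using assms(6) unfolding K_def Sr_def S_def by simp
    hence "real \<beta> powr (log (real \<beta>) (K * Sr)) \<le> real \<beta> powr (real t - 1)"
      using b by (intro powr_mono) auto
    hence P: "K * Sr \<le> real \<beta> powr (real t - 1)" using b KS by simp
    have "real \<beta> powr (1 - real t) = inverse (real \<beta> powr (real t - 1))"
      using powr_minus[of "real \<beta>" "real t - 1"] by simp
    hence "?u = 1 / (2 * real \<beta> powr (real t - 1))" unfolding unit_roundoff_def by (simp add: field_simps)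
    also have "\<dots> \<le> 1 / (2 * (K * Sr))"
    proof (rule divide_left_mono)
      have "0 < real \<beta> powr (real t - 1)" using b by simp
      thus "0 < 2 * real \<beta> powr (real t - 1) * (2 * (K * Sr))" using KS by simp
    qed (use P in auto)
    finally have ub: "?u \<le> 1 / (2 * (K * Sr))" .
    have "0 \<le> (\<Sum>s\<in>{1..<n}. GG s)" using GG0 by (intro sum_nonneg) auto
    from num1[OF assms(3,4) Sr1 this sumGG u_nonneg] ub n2 show ?thesis unfolding K_def by simp
  qed
  have run: "ereal (fp_growth n ah) \<le> ereal (1 + C) * gCP n" if hat: "(A, ah) \<in> hatCP \<beta> t n" for A ah
  proof -
    have u8: "2 \<le> n \<Longrightarrow> ?u \<le> 1/8" using key by auto
    have cstN: "cst ?u ah N" if "1 \<le> N" "N \<le> n" for N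
      using hat_cst[OF hat that] u8 that by auto
    let ?p1 = "\<bar>ah 1 1 1\<bar>"
    have p1: "0 < ?p1" using hat_piv[OF hat, of 1] assms(2) by auto
    have Dle: "Dd ?u ah N 1 \<le> C * ?p1"
      if N: "1 \<le> N" "N \<le> n" and IH: "\<And>s. s \<in> {1..<N} \<Longrightarrow> \<bar>ah s s s\<bar> \<le> (1+C)*GG s*?p1" for N
    proof -
      have "(\<Sum>s\<in>{1..<N}. \<bar>ah s s s\<bar>) \<le> (\<Sum>s\<in>{1..<N}. (1+C)*?p1*GG s)"
        by (rule sum_mono) (use IH in \<open>auto simp: mult_ac\<close>)
      also have "\<dots> = (1+C)*?p1*(\<Sum>s\<in>{1..<N}. GG s)" by (simp add: sum_distrib_left)
      also have "\<dots> \<le> (1+C)*?p1*(\<Sum>s\<in>{1..<n}. GG s)"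
        by (intro mult_left_mono sum_mono2) (use N GG0 p1 assms(3) in auto)
      finally have A1: "(\<Sum>s\<in>{1..<N}. \<bar>ah s s s\<bar>) \<le> (1+C)*?p1*(\<Sum>s\<in>{1..<n}. GG s)" .
      have "Dd ?u ah N 1 = 5*?u*(\<Sum>s\<in>{1..<N}. \<bar>ah s s s\<bar>)" by (simp add: Dd_def)
      also have "\<dots> \<le> 5*?u*((1+C)*?p1*(\<Sum>s\<in>{1..<n}. GG s))"
        by (rule mult_left_mono[OF A1]) (simp add: u_nonneg)
      also have "\<dots> = ?p1*(5*?u*(1+C)*(\<Sum>s\<in>{1..<n}. GG s))" by (simp add: mult_ac)
      also have "\<dots> \<le> ?p1*C" using key p1 by (intro mult_left_mono) auto
      finally show ?thesis by (simp add: mult_ac)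
    qed
    have gr: "growth N (Xm ?u ah N) \<le> GG N" if "1 \<le> N" "N < n" for N
    proof -
      interpret cst ?u ah N using cstN that by auto
      have "ereal (growth N (Xm ?u ah N)) \<le> gCP N" unfolding gCP_def using X_CP by (rule SUP_upper)
      thus ?thesis using GGe[of N] that by simp
    qed
    have rec: "\<bar>ah r r r\<bar> \<le> (1+C)*GG r*?p1" if "r \<in> {1..<n}" for r
      using that
    proof (induction r rule: less_induct)
      case (less r)
      interpret cst ?u ah r using cstN less.prems by auto
      have D: "Dd ?u ah r 1 \<le> C*?p1" using less by (intro Dle) auto
      have X: "\<bar>ah r r r\<bar> \<le> growth r (Xm ?u ah r) * (?p1 + Dd ?u ah r 1)" using X_growth[of r] less.prems by auto
      also have "\<dots> \<le> GG r * ((1+C)*?p1)"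
        by (rule mult_mono) (use gr[of r] less.prems D GG0[of r] p1 Dd_nonneg[OF u_nonneg[of \<beta> t], of ah r 1] in \<open>auto simp: algebra_simps\<close>)
      finally show ?case by (simp add: mult_ac)
    qed
    interpret cst ?u ah n using cstN assms(2) by auto
    have D: "Dd ?u ah n 1 \<le> C*?p1" using rec by (intro Dle) (use assms(2) in auto)
    let ?g = "growth n (Xm ?u ah n)"
    have Dp: "0 < ?p1 + Dd ?u ah n 1" using p1 Dd_nonneg[OF u_nonneg[of \<beta> t], of ah n 1] by simp
    have "0 < ?g * (?p1 + Dd ?u ah n 1)" using X_growth[of 1] assms(2) p1 by simp
    hence g0': "0 \<le> ?g" using Dp by (simp add: zero_less_mult_iff)
    have pk: "\<bar>ah k k k\<bar> \<le> ?g*((1+C)*?p1)" if "1 \<le> k" "k \<le> n" for k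
    proof -
      have "\<bar>ah k k k\<bar> \<le> ?g * (?p1 + Dd ?u ah n 1)" using X_growth[of k] that by auto
      also have "\<dots> \<le> ?g*((1+C)*?p1)" by (rule mult_left_mono) (use D g0' in \<open>auto simp: algebra_simps\<close>)
      finally show ?thesis .
    qed
    have me: "max_entry n (ah 1) = ?p1"
      unfolding max_entry_def
    proof (rule Max_eqI[OF fin_entry])
      fix y assume "y \<in> {\<bar>ah 1 i j\<bar> |i j. i \<in> {1..n} \<and> j \<in> {1..n}}"
      then obtain i j where "y = \<bar>ah 1 i j\<bar>" "i \<in> {1..n}" "j \<in> {1..n}" by blast
      then show "y \<le> ?p1" using hat_dom[OF hat, of 1 i j] by auto
    next
      show "?p1 \<in> {\<bar>ah 1 i j\<bar> |i j. i \<in> {1..n} \<and> j \<in> {1..n}}" using assms(2) by force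
    qed
    have mse: "max_stage_entry n ah \<le> ?g*((1+C)*?p1)"
      unfolding max_stage_entry_def
    proof (rule Max.boundedI[OF fin_stage])
      show "{\<bar>ah k i j\<bar> |k i j. 1 \<le> k \<and> k \<le> i \<and> k \<le> j \<and> i \<le> n \<and> j \<le> n} \<noteq> {}"
        using assms(2) by blast
    next
      fix y assume "y \<in> {\<bar>ah k i j\<bar> |k i j. 1 \<le> k \<and> k \<le> i \<and> k \<le> j \<and> i \<le> n \<and> j \<le> n}"
      then obtain k i j where y: "y = \<bar>ah k i j\<bar>" "1 \<le> k" "k \<le> i" "k \<le> j" "i \<le> n" "j \<le> n" by blast
      then have "y \<le> \<bar>ah k k k\<bar>" using hat_dom[OF hat, of k i j] by auto
      also have "\<dots> \<le> ?g*((1+C)*?p1)" using pk y by auto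
      finally show "y \<le> ?g*((1+C)*?p1)" .
    qed
    have "fp_growth n ah \<le> (1+C)*?g"
      unfolding fp_growth_def me using mse p1 by (simp add: pos_divide_le_eq mult_ac)
    hence "ereal (fp_growth n ah) \<le> ereal (1+C) * ereal ?g" by simp
    also have "\<dots> \<le> ereal (1+C) * gCP n"
    proof (rule ereal_mult_left_mono)
      show "ereal ?g \<le> gCP n" unfolding gCP_def using X_CP by (rule SUP_upper)
    qed (use assms(3) in simp)
    finally show ?thesis .
  qed
  show ?thesis unfolding GhatCP_def
  proof (rule SUP_least)
    fix p assume "p \<in> hatCP \<beta> t n"
    then show "ereal (fp_growth n (snd p)) \<le> ereal (1 + C) * gCP n"
      by (cases p) (auto intro: run)
  qed
qed

end
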